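(* Let $M\in\mathbb{R}^{p\times q}_+$ with $\operatorname{rank}(M)=\binom{k+1}{2}$ and $\operatorname{rank}_{\mathrm{psd}}(M)=k$. Fix a rank factorization $M=UV$ with $U\in\mathbb{R}^{p\times d}$, $V\in\mathbb{R}^{d\times q}$, $d=\binom{k+1}{2}$; let $u_i\in\mathbb{R}^d$ be the $i$-th row of $U$ (as a vector) and $v_j\in\mathbb{R}^d$ the $j$-th column of $V$. Let $P=\operatorname{cone}(u_1,\dots,u_p)$ and $Q=\{x\in\mathbb{R}^d: v_j^Tx\ge0\ \text{for all } j\}$. Then $\mathcal{SF}(M)$ is homeomorphic to $\Delta_k(P,Q)$.
   Context: $\mathcal{S}^k$ is the space of real symmetric $k\times k$ matrices, $\mathcal{S}^k_+$ the psd cone, $\langle A,B\rangle=\operatorname{trace}(AB)$. The psd rank of $M$ is the smallest $k$ admitting $A_1,\dots,A_p,B_1,\dots,B_q\in\mathcal{S}^k_+$ with $M_{ij}=\langle A_i,B_j\rangle$. With $k=\operatorname{rank}_{\mathrm{psd}}(M)$, the space of psd factorizations $\mathcal{SF}(M)\subseteq(\mathcal{S}^k)^{p+q}$ is the set of all tuples $(A_1,\dots,A_p,B_1,\dots,B_q)$ of matrices in $\mathcal{S}^k_+$ with $M_{ij}=\langle A_i,B_j\rangle$ for all $i,j$, with the subspace topology. $\Delta_k(P,Q)$ is the set of all linear maps $\pi:\mathcal{S}^k\to\mathbb{R}^{\binom{k+1}{2}}$ with $P\subseteq\pi(\mathcal{S}^k_+)\subseteq Q$, with the subspace topology of the space of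 linear maps. *)

theory Defs
  imports "HOL-Analysis.Analysis"
begin

definition sym_mats :: "(real^'k^'k) set" where
  "sym_mats = {X. transpose X = X}"

definition psd_cone :: "(real^'k^'k) set" where
  "psd_cone = {X. transpose X = X \<and> (\<forall>v. 0 \<le> v \<bullet> (X *v v))}"

definition trace_ip :: "real^'k^'k \<Rightarrow> real^'k^'k \<Rightarrow> real" where
  "trace_ip A B = trace (A ** B)"

text \<open>psd matrices of size k, with size given by a natural number (needed because
  the psd rank quantifies over the size).\<close>
definition psd_n :: "nat \<Rightarrow> (nat \<Rightarrow> nat \<Rightarrow> real) \<Rightarrow> bool" where
  "psd_n k X \<longleftrightarrow> (\<forall>a<k. \<forall>b<k. X a b = X b a) \<and>
     (\<forall>v. 0 \<le> (\<Sum>a<k. \<Sum>b<k. v a * X a b * v b))"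

definition psd_factorizable :: "nat \<Rightarrow> real^'q^'p \<Rightarrow> bool" where
  "psd_factorizable k M \<longleftrightarrow>
     (\<exists>(A :: 'p \<Rightarrow> nat \<Rightarrow> nat \<Rightarrow> real) (B :: 'q \<Rightarrow> nat \<Rightarrow> nat \<Rightarrow> real).
        (\<forall>i. psd_n k (A i)) \<and> (\<forall>j. psd_n k (B j)) \<and>
        (\<forall>i j. M $ i $ j = (\<Sum>a<k. \<Sum>b<k. A i a b * B j b a)))"

definition psd_rank :: "real^'q^'p \<Rightarrow> nat" where
  "psd_rank M = (LEAST k. psd_factorizable k M)"

definition psd_factorizations :: "real^'q^'p \<Rightarrow> (((real^'k^'k)^'p) \<times> ((real^'k^'k)^'q)) set" where
  "psd_factorizations M = {(A, B). (\<forall>i. A $ i \<in> psd_cone) \<and> (\<forall>j. B $ j \<in> psd_cone) \<and>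
        (\<forall>i j. M $ i $ j = trace_ip (A $ i) (B $ j))}"

text \<open>Linear maps S^k \<rightarrow> R^d, represented as bounded linear maps on all k x k matrices
  that are invariant under transposition (i.e. factor through the symmetric part).\<close>
definition Delta :: "(real^'d) set \<Rightarrow> (real^'d) set \<Rightarrow> ((real^'k^'k) \<Rightarrow>\<^sub>L (real^'d)) set" where
  "Delta P Q = {\<pi>. (\<forall>X. blinfun_apply \<pi> (transpose X) = blinfun_apply \<pi> X) \<and>
        P \<subseteq> blinfun_apply \<pi> ` psd_cone \<and> blinfun_apply \<pi> ` psd_cone \<subseteq> Q}"

definition row_cone :: "real^'d^'p \<Rightarrow> (real^'d) set" where
  "row_cone U = {x. \<exists>c::'p \<Rightarrow> real. (\<forall>i. 0 \<le> c i) \<and> x = (\<Sum>i\<in>UNIV. c i *\<^sub>R row i U)}"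

definition col_dual :: "real^'q^'d \<Rightarrow> (real^'d) set" where
  "col_dual V = {x. \<forall>j. 0 \<le> column j V \<bullet> x}"

end

theory Submission
  imports Defs
begin


lemma trace_ip_expand: "trace_ip A B = (\<Sum>a\<in>UNIV. \<Sum>b\<in>UNIV. A$a$b * B$b$a)"
  by (simp add: trace_ip_def trace_def matrix_matrix_mult_def)

lemma trace_ip_comm: "trace_ip A B = trace_ip B A"
  unfolding trace_ip_expand by (subst sum.swap) (simp add: mult.commute)

lemma qf_expand: "v \<bullet> (X *v w) = (\<Sum>a\<in>UNIV. \<Sum>b\<in>UNIV. v$a * X$a$b * w$b)"
  by (simp add: inner_vec_def matrix_vector_mult_def sum_distrib_left mult.assoc)

lemma trace_ip_lin2: "trace_ip B (X + s *\<^sub>R Y) = trace_ip B X + s * trace_ip B Y"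
  by (simp add: trace_ip_expand algebra_simps sum.distrib sum_distrib_left)

lemma trace_ip_transpose:
  assumes "transpose B = B" shows "trace_ip B (transpose X) = trace_ip B X"
proof -
  have "\<And>a b. B$a$b = B$b$a" using assms by (metis transpose_def vec_lambda_beta)
  then show ?thesis unfolding trace_ip_expand transpose_def
    by (subst sum.swap) (simp add: mult.commute)
qed

definition outer :: "real^'k \<Rightarrow> real^'k^'k" where "outer x = (\<chi> a b. x$a * x$b)"

lemma trace_ip_outer: "trace_ip B (outer x) = x \<bullet> (B *v x)"
  unfolding trace_ip_expand qf_expand outer_def by (simp add: mult.commute mult.left_commute)

lemma qf_outer: "v \<bullet> (outer x *v v) = (x \<bullet> v)^2"
  unfolding qf_expand outer_def
  by (simp add: inner_vec_def power2_eq_square sum_distrib_left sum_distrib_right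
        mult.commute mult.left_commute)

lemma outer_psd: "outer x \<in> psd_cone"
proof -
  have "transpose (outer x) = outer x" by (simp add: outer_def transpose_def vec_eq_iff mult.commute)
  then show ?thesis unfolding psd_cone_def by (simp add: qf_outer)
qed

lemma psd_sym: "X \<in> psd_cone \<Longrightarrow> X$a$b = X$b$a"
  unfolding psd_cone_def by (metis (mono_tags, lifting) mem_Collect_eq transpose_def vec_lambda_beta)

lemma qf_axis: "axis i 1 \<bullet> (X *v axis j 1) = (X$i$j::real)"
  by (metis cart_eq_inner_axis inner_commute matrix_vector_mult_basis column_def vec_lambda_beta)

lemma scaleR_mv: "((s::real) *\<^sub>R (X::real^_^_)) *v v = s *\<^sub>R (X *v v)"
  unfolding vec_eq_iff matrix_vector_mult_def by (simp add: sum_distrib_left mult.assoc)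

lemmas bil_simps = inner_add_left inner_add_right inner_diff_left inner_diff_right
  inner_scaleR_left inner_scaleR_right matrix_vector_right_distrib matrix_vector_mult_diff_distrib
  scaleR_mv matrix_vector_mult_add_rdistrib matrix_vector_mult_diff_rdistrib

lemma psd_dual:
  fixes B X :: "real^'k^'k"
  assumes B: "B \<in> psd_cone" and X: "X \<in> psd_cone" shows "0 \<le> trace_ip B X"
proof -
  have Bq: "0 \<le> v \<bullet> (B *v v)" for v using B by (simp add: psd_cone_def)
  have "\<forall>X. X \<in> psd_cone \<and> (\<forall>a b. X$a$b \<noteq> 0 \<longrightarrow> a \<in> K \<and> b \<in> K) \<longrightarrow> 0 \<le> trace_ip B X"
    if "finite K" for K :: "'k set"
    using that
  proof (induction K rule: finite_induct)
    case empty
    show ?case by (auto simp: trace_ip_expand)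
  next
    case (insert c K)
    show ?case
    proof (intro allI impI, elim conjE)
      fix X :: "real^'k^'k"
      assume X: "X \<in> psd_cone" and supp: "\<forall>a b. X$a$b \<noteq> 0 \<longrightarrow> a \<in> insert c K \<and> b \<in> insert c K"
      have q: "0 \<le> v \<bullet> (X *v v)" for v using X by (simp add: psd_cone_def)
      have sym: "X$a$b = X$b$a" for a b using X psd_sym by blast
      show "0 \<le> trace_ip B X"
      proof (cases "X$c$c = 0")
        case True
        have row0: "X$c$b = 0" for b
        proof (rule ccontr)
          assume ne: "X$c$b \<noteq> 0"
          define t where "t = - (X$b$b + 1) / (2 * X$c$b)"
          define v where "v = axis b 1 + t *\<^sub>R axis c (1::real)"
          have "v \<bullet> (X *v v) = X$b$b + t * X$b$c + t * X$c$b + t * t * X$c$c"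
            unfolding v_def by (simp add: bil_simps qf_axis algebra_simps)
          also have "\<dots> = -1" using ne True sym[of b c] by (simp add: t_def field_simps)
          finally show False using q[of v] by simp
        qed
        then have "\<forall>a b. X$a$b \<noteq> 0 \<longrightarrow> a \<in> K \<and> b \<in> K" using supp sym by (metis insert_iff)
        then show ?thesis using insert.IH X by blast
      next
        case False
        have pos: "X$c$c > 0" using q[of "axis c 1"] False qf_axis[of c X c] by simp
        define x where "x = column c X"
        have xa: "x$a = X$a$c" for a by (simp add: x_def column_def)
        define Y where "Y = X - (1 / X$c$c) *\<^sub>R outer x"
        have Yab: "Y$a$b = X$a$b - X$a$c * X$b$c / X$c$c" for a b
          by (simp add: Y_def outer_def xa)
        have r1: "axis c 1 \<bullet> (X *v v) = x \<bullet> v" for v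
        proof -
          have "axis c 1 \<bullet> (X *v v) = (X *v v)$c" by (simp add: cart_eq_inner_axis inner_commute)
          then show ?thesis by (simp add: matrix_vector_mult_def inner_vec_def xa sym mult.commute)
        qed
        have r2: "v \<bullet> (X *v axis c 1) = x \<bullet> v" for v
          by (simp add: matrix_vector_mult_basis x_def inner_commute)
        have xc: "x \<bullet> axis c 1 = X$c$c" by (metis cart_eq_inner_axis xa)
        have "0 \<le> v \<bullet> (Y *v v)" for v
        proof -
          define t where "t = (x \<bullet> v) / X$c$c"
          have "0 \<le> (v - t *\<^sub>R axis c 1) \<bullet> (X *v (v - t *\<^sub>R axis c 1))" by (rule q)
          also have "\<dots> = v \<bullet> (X *v v) - t * (x \<bullet> v) - t * (x \<bullet> v) + t * t * X$c$c"
            using xc by (simp add: bil_simps qf_axis r1 r2 algebra_simps)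
          also have "\<dots> = v \<bullet> (X *v v) - (1 / X$c$c) * (x \<bullet> v)^2"
            using pos by (simp add: t_def field_simps power2_eq_square)
          also have "\<dots> = v \<bullet> (Y *v v)"
            by (simp add: Y_def bil_simps qf_outer)
          finally show ?thesis .
        qed
        moreover have "transpose Y = Y"
          by (simp add: vec_eq_iff transpose_def Yab sym mult.commute)
        ultimately have Ypsd: "Y \<in> psd_cone" by (simp add: psd_cone_def)
        have Ysupp: "\<forall>a b. Y$a$b \<noteq> 0 \<longrightarrow> a \<in> K \<and> b \<in> K"
        proof (intro allI impI)
          fix a b assume ne: "Y$a$b \<noteq> 0"
          have "a \<noteq> c" using ne pos by (auto simp: Yab sym)
          moreover have "b \<noteq> c" using ne pos by (auto simp: Yab sym)
          moreover have "a \<in> insert c K" using ne supp Yab by (metis diff_zero mult_zero_left div_0)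
          moreover have "b \<in> insert c K" using ne supp Yab sym
            by (metis diff_zero mult_zero_right div_0)
          ultimately show "a \<in> K \<and> b \<in> K" by auto
        qed
        have "X = Y + (1 / X$c$c) *\<^sub>R outer x" by (simp add: Y_def)
        then have "trace_ip B X = trace_ip B Y + (1 / X$c$c) * trace_ip B (outer x)"
          by (metis trace_ip_lin2)
        moreover have "0 \<le> trace_ip B Y" using insert.IH Ypsd Ysupp by blast
        moreover have "0 \<le> trace_ip B (outer x)" using Bq by (simp add: trace_ip_outer)
        ultimately show ?thesis using pos by simp
      qed
    qed
  qed
  then show ?thesis using X by auto
qed



lemma card_R:
  "card ({s::'k::finite set. card s = 1} \<union> {s. card s = 2}) = (CARD('k) + 1) choose 2"
proof -
  have d: "{s::'k set. card s = 1} \<inter> {s. card s = 2} = {}" by auto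
  have c1: "card {s::'k set. card s = 1} = CARD('k) choose 1"
    using n_subsets[of "UNIV::'k set" 1] by simp
  have c2: "card {s::'k set. card s = 2} = CARD('k) choose 2"
    using n_subsets[of "UNIV::'k set" 2] by simp
  have "card ({s::'k::finite set. card s = 1} \<union> {s. card s = 2}) = (CARD('k) choose 1) + (CARD('k) choose 2)"
    using card_Un_disjoint[OF _ _ d] c1 c2 by simp
  also have "\<dots> = Suc (CARD('k)) choose Suc 1" by (simp only: binomial_Suc_Suc One_nat_def numeral_2_eq_2)
  finally show ?thesis by (simp add: numeral_2_eq_2)
qed

lemma sym_coords:
  assumes "CARD('d) = (CARD('k) + 1) choose 2"
  shows "\<exists>(\<epsilon> :: real^'d \<Rightarrow> real^'k^'k) (e :: real^'k^'k \<Rightarrow> real^'d). linear \<epsilon> \<and> linear e \<and>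
     (\<forall>y. e (\<epsilon> y) = y) \<and> (\<forall>y. transpose (\<epsilon> y) = \<epsilon> y) \<and> (\<forall>X. transpose X = X \<longrightarrow> \<epsilon> (e X) = X)"
proof -
  define R where "R = {s::'k set. card s = 1} \<union> {s. card s = 2}"
  have "card (UNIV::'d set) = card R" using assms card_R[where 'k='k] unfolding R_def by simp
  then obtain h where h: "bij_betw h (UNIV::'d set) R"
    using finite_same_card_bij[of "UNIV::'d set" R] by auto
  have pairR: "{a,b} \<in> R" for a b :: 'k
    by (cases "a = b") (auto simp: R_def)
  have Rpair: "\<exists>a b. s = {a,b}" if "s \<in> R" for s
  proof -
    have "card s = 1 \<or> card s = 2" using that unfolding R_def by auto
    then show ?thesis
    proof
      assume "card s = 1" then obtain a where "s = {a}" using card_1_singletonE by blast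
      then show ?thesis by auto
    next
      assume "card s = 2" then show ?thesis by (auto simp: card_2_iff)
    qed
  qed
  define rep where "rep s = (SOME p. s = {fst p, snd p})" for s :: "'k set"
  have rep: "s = {fst (rep s), snd (rep s)}" if "s \<in> R" for s
    unfolding rep_def using Rpair[OF that] by (metis (mono_tags, lifting) fst_conv snd_conv someI)
  have hinj: "h i = h j \<longleftrightarrow> i = j" for i j using h by (auto simp: bij_betw_def inj_on_def)
  have hR: "h i \<in> R" for i using h by (auto simp: bij_betw_def)
  have hsurj: "\<exists>i. h i = s" if "s \<in> R" for s using h that by (auto simp: bij_betw_def)
  define \<epsilon> where "\<epsilon> y = (\<chi> a b. \<Sum>i\<in>UNIV. if h i = {a,b} then y$i else 0)" for y :: "real^'d"
  define e where "e X = (\<chi> i. X $ fst (rep (h i)) $ snd (rep (h i)))" for X :: "real^'k^'k"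
  have "linear \<epsilon>"
    by (rule linearI) (auto simp: \<epsilon>_def vec_eq_iff sum.distrib[symmetric] sum_distrib_left intro!: sum.cong)
  moreover have "linear e"
    by (rule linearI) (simp_all add: e_def vec_eq_iff)
  moreover have "e (\<epsilon> y) = y" for y
  proof -
    have "e (\<epsilon> y) $ i = y $ i" for i
    proof -
      have "e (\<epsilon> y) $ i = (\<Sum>j\<in>UNIV. if h j = h i then y$j else 0)"
        using rep[OF hR[of i]] by (simp add: e_def \<epsilon>_def)
      also have "\<dots> = y $ i" by (simp add: hinj)
      finally show ?thesis .
    qed
    then show ?thesis by (simp add: vec_eq_iff)
  qed
  moreover have "transpose (\<epsilon> y) = \<epsilon> y" for y
    by (simp add: \<epsilon>_def transpose_def vec_eq_iff insert_commute)
  moreover have "\<epsilon> (e X) = X" if X: "transpose X = X" for X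
  proof -
    have sym: "X$a$b = X$b$a" for a b using X by (metis transpose_def vec_lambda_beta)
    have "\<epsilon> (e X) $ a $ b = X $ a $ b" for a b
    proof -
      obtain i where i: "h i = {a,b}" using hsurj pairR by blast
      have "\<epsilon> (e X) $ a $ b = (\<Sum>j\<in>UNIV. if j = i then e X $ j else 0)"
        by (simp add: \<epsilon>_def i[symmetric] hinj)
      also have "\<dots> = X $ fst (rep {a,b}) $ snd (rep {a,b})" by (simp add: e_def i)
      also have "\<dots> = X $ a $ b"
        using rep[OF pairR[of a b]] sym by (auto simp: doubleton_eq_iff)
      finally show ?thesis .
    qed
    then show ?thesis by (simp add: vec_eq_iff)
  qed
  ultimately show ?thesis by blast
qed



definition emat :: "'k \<Rightarrow> 'k \<Rightarrow> real^'k^'k" where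
  "emat a b = (\<chi> x y. if x = a \<and> y = b then 1 else 0)"

lemma sum2_delta: "(\<Sum>x\<in>(UNIV::'a::finite set). \<Sum>y\<in>(UNIV::'b::finite set). if i = x \<and> j = y then f x y else 0) = (f i j :: real)"
proof -
  have "(\<Sum>y\<in>UNIV. if i = x \<and> j = y then f x y else 0) = (if i = x then f x j else 0)" for x
    by (cases "i = x") (simp_all add: sum.delta')
  then show ?thesis by simp
qed

lemma mat_expand: "X = (\<Sum>a\<in>UNIV. \<Sum>b\<in>UNIV. X$a$b *\<^sub>R emat a b)"
proof -
  have "(\<Sum>a\<in>UNIV. \<Sum>b\<in>UNIV. X$a$b *\<^sub>R emat a b)$i$j = X$i$j" for i j
  proof -
    have "(\<Sum>a\<in>UNIV. \<Sum>b\<in>UNIV. X$a$b *\<^sub>R emat a b)$i$j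
        = (\<Sum>a\<in>UNIV. \<Sum>b\<in>UNIV. if i = a \<and> j = b then X$a$b else 0)"
      unfolding sum_component by (intro sum.cong refl) (simp add: emat_def)
    also have "\<dots> = X$i$j" by (rule sum2_delta)
    finally show ?thesis .
  qed
  then show ?thesis by (simp add: vec_eq_iff)
qed

lemma blin_expand: "blinfun_apply \<pi> X = (\<Sum>a\<in>UNIV. \<Sum>b\<in>UNIV. X$a$b *\<^sub>R blinfun_apply \<pi> (emat a b))"
  by (subst mat_expand) (simp add: blinfun.sum_right blinfun.scaleR_right)

lemma Badj_trace:
  "trace_ip (\<chi> a b. w \<bullet> blinfun_apply \<pi> (emat b a)) X = w \<bullet> blinfun_apply \<pi> X"
  apply (subst (2) blin_expand)
  apply (simp add: trace_ip_expand inner_sum_right)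
  apply (subst sum.swap)
  apply (simp add: mult.commute)
  done

lemma transpose_emat: "transpose (emat a b) = emat b a"
  by (auto simp: transpose_def emat_def vec_eq_iff)

lemma trace_ip_add2: "trace_ip B (X + Y) = trace_ip B X + trace_ip B Y"
  by (simp add: trace_ip_expand algebra_simps sum.distrib)

lemma trace_ip_scale2: "trace_ip B (c *\<^sub>R X) = c * trace_ip B X"
  by (simp add: trace_ip_expand algebra_simps sum_distrib_left)

lemma linear_trace_ip: "linear (trace_ip B)"
  by (rule linearI) (simp_all add: trace_ip_add2 trace_ip_scale2)

lemma bl_piB: "bounded_linear (\<lambda>X::real^'k^'k. \<Sum>j\<in>UNIV. trace_ip (B$j) X *\<^sub>R (r j :: real^'d))"
proof -
  have "linear (\<lambda>X::real^'k^'k. \<Sum>j\<in>UNIV. trace_ip (B$j) X *\<^sub>R (r j :: real^'d))"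
    by (rule linearI) (simp_all add: trace_ip_add2 trace_ip_scale2 scaleR_add_left sum.distrib scaleR_sum_right)
  then show ?thesis by (simp add: linear_conv_bounded_linear)
qed

lemma continuous_on_det:
  assumes "\<And>i j. continuous_on S (\<lambda>x. F x $ i $ j)"
  shows "continuous_on S (\<lambda>x. det (F x :: real^'n^'n))"
  unfolding det_def by (intro continuous_intros assms)

lemma continuous_on_trace_ip:
  assumes "\<And>i j. continuous_on S (\<lambda>x. F x $ i $ j)"
  shows "continuous_on S (\<lambda>x. trace_ip (F x) X)"
  unfolding trace_ip_expand by (intro continuous_intros assms)

lemma row_mult: "row i (X ** Y) = (\<Sum>j\<in>UNIV. X$i$j *\<^sub>R row j (Y::real^'c^'b))"
  by (simp add: vec_eq_iff row_def matrix_matrix_mult_def mult.commute)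

lemma mult_entry: "(U ** V)$i$j = row i U \<bullet> column j (V::real^'c^'b)"
  by (simp add: matrix_matrix_mult_def inner_vec_def row_def column_def)

lemma psd_comb:
  assumes "\<forall>i. A$i \<in> psd_cone" "\<forall>i. 0 \<le> c i"
  shows "(\<Sum>i\<in>UNIV. c i *\<^sub>R A$i) \<in> (psd_cone :: (real^'k^'k) set)"
proof -
  have "transpose (\<Sum>i\<in>UNIV. c i *\<^sub>R A$i) = (\<Sum>i\<in>UNIV. c i *\<^sub>R A$i)"
  proof -
    have "A$x$a$b = A$x$b$a" for x a b using assms(1) psd_sym by blast
    then show ?thesis by (simp add: transpose_def vec_eq_iff)
  qed
  moreover have "0 \<le> v \<bullet> ((\<Sum>i\<in>UNIV. c i *\<^sub>R A$i) *v v)" for v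
  proof -
    have "v \<bullet> ((\<Sum>i\<in>UNIV. c i *\<^sub>R A$i) *v v) = (\<Sum>i\<in>UNIV. c i * (v \<bullet> (A$i *v v)))"
      unfolding qf_expand sum_component sum_distrib_left
      by (subst sum.swap, rule sum.cong[OF refl], subst sum.swap, rule sum.cong[OF refl]) (simp add: sum_distrib_left algebra_simps)
    also have "\<dots> \<ge> 0" using assms by (intro sum_nonneg mult_nonneg_nonneg) (auto simp: psd_cone_def)
    finally show ?thesis by simp
  qed
  ultimately show ?thesis by (simp add: psd_cone_def)
qed

lemma trace_ip_add1: "trace_ip (X + Y) B = trace_ip X B + trace_ip Y B"
  by (simp add: trace_ip_expand algebra_simps sum.distrib)

lemma trace_ip_scale1: "trace_ip (c *\<^sub>R X) B = c * trace_ip X B"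
  by (simp add: trace_ip_expand algebra_simps sum_distrib_left)

lemma trace_ip_emat: "trace_ip B (emat b a) = B$a$b"
proof -
  have "trace_ip B (emat b a) = (\<Sum>x\<in>UNIV. \<Sum>y\<in>UNIV. if a = x \<and> b = y then B$x$y else 0)"
    unfolding trace_ip_expand by (intro sum.cong refl) (auto simp: emat_def)
  also have "\<dots> = B$a$b" by (rule sum2_delta)
  finally show ?thesis .
qed

lemma VR_id:
  fixes V :: "real^'q^'d" and R :: "real^'d^'q"
  assumes "V ** R = mat 1"
  shows "(\<Sum>j\<in>UNIV. (column j V \<bullet> y) *\<^sub>R row j R) = y"
proof -
  have "(\<Sum>j\<in>UNIV. (column j V \<bullet> y) *\<^sub>R row j R) $ k = y $ k" for k
  proof -
    have "(\<Sum>j\<in>UNIV. (column j V \<bullet> y) *\<^sub>R row j R) $ k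
        = (\<Sum>j\<in>UNIV. \<Sum>l\<in>UNIV. y$l * (V$l$j * R$j$k))"
      by (simp add: inner_vec_def column_def row_def sum_distrib_left mult_ac)
    also have "\<dots> = (\<Sum>l\<in>UNIV. y$l * (V ** R)$l$k)"
      by (subst sum.swap) (simp add: matrix_matrix_mult_def sum_distrib_left)
    also have "\<dots> = y$k" using assms by (simp add: mat_def if_distrib[of "\<lambda>x. c * x" for c] cong: if_cong)
    finally show ?thesis .
  qed
  then show ?thesis by (simp add: vec_eq_iff)
qed



theorem proposition7p3:
  fixes M :: "real^'q^'p" and U :: "real^'d^'p" and V :: "real^'q^'d"
  assumes "\<forall>i j. 0 \<le> M $ i $ j"
    and "CARD('d) = (CARD('k) + 1) choose 2"
    and "rank M = CARD('d)"
    and "psd_rank M = CARD('k)"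
    and "M = U ** V"
  shows "(psd_factorizations M :: (((real^'k^'k)^'p) \<times> ((real^'k^'k)^'q)) set)
           homeomorphic
         (Delta (row_cone U) (col_dual V) :: ((real^'k^'k) \<Rightarrow>\<^sub>L (real^'d)) set)"
proof -
  obtain \<epsilon> :: "real^'d \<Rightarrow> real^'k^'k" and e :: "real^'k^'k \<Rightarrow> real^'d" where
    \<epsilon>lin: "linear \<epsilon>" and elin: "linear e" and ee: "\<And>y. e (\<epsilon> y) = y"
    and \<epsilon>sym: "\<And>y. transpose (\<epsilon> y) = \<epsilon> y" and \<epsilon>e: "\<And>X. transpose X = X \<Longrightarrow> \<epsilon> (e X) = X"
    using sym_coords[OF assms(2)] by blast
  have rU: "rank U = CARD('d)"
    using rank_mul_le_left[of U V] rank_bound[of U] assms(3,5) by (simp add: min_def split: if_splits)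
  have rV: "rank V = CARD('d)"
    using rank_mul_le_right[of U V] rank_bound[of V] assms(3,5) by (simp add: min_def split: if_splits)
  obtain R :: "real^'d^'q" where R: "V ** R = mat 1"
    using rV full_rank_surjective[of V] matrix_right_invertible_surjective[of V] by blast
  have spanU: "span (rows U) = UNIV"
    using rU dim_eq_full[of "rows U"] by (simp add: row_rank_def)
  define S where "S = {X :: real^'k^'k. transpose X = X}"
  have S_eq: "S = range \<epsilon>"
  proof
    show "S \<subseteq> range \<epsilon>" using \<epsilon>e by (auto simp: S_def) (metis rangeI)
    show "range \<epsilon> \<subseteq> S" using \<epsilon>sym by (auto simp: S_def)
  qed
  define piB where "piB B = Blinfun (\<lambda>X. \<Sum>j\<in>UNIV. trace_ip (B$j) X *\<^sub>R row j R)"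
    for B :: "(real^'k^'k)^'q"
  have piB_apply: "blinfun_apply (piB B) X = (\<Sum>j\<in>UNIV. trace_ip (B$j) X *\<^sub>R row j R)" for B X
    unfolding piB_def using bl_piB[of B "\<lambda>j. row j R"] by (simp add: bounded_linear_Blinfun_apply)
  define Npi where "Npi \<pi> = matrix (\<lambda>y. blinfun_apply \<pi> (\<epsilon> y))" for \<pi> :: "(real^'k^'k) \<Rightarrow>\<^sub>L (real^'d)"
  have lin_pe: "linear (\<lambda>y. blinfun_apply \<pi> (\<epsilon> y))" for \<pi> :: "(real^'k^'k) \<Rightarrow>\<^sub>L (real^'d)"
    using linear_compose[OF \<epsilon>lin bounded_linear.linear[OF blinfun.bounded_linear_right]]
    by (simp add: o_def)
  have Nmul: "Npi \<pi> *v y = blinfun_apply \<pi> (\<epsilon> y)" for \<pi> y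
  proof -
    have "Vector_Spaces.linear (*s) (*s) (\<lambda>y. blinfun_apply \<pi> (\<epsilon> y))"
      using lin_pe[of \<pi>] linear_matrix_vector_mul_eq by blast
    from matrix_works[OF this] show ?thesis unfolding Npi_def .
  qed
  have Nent: "Npi \<pi> $ r $ c = blinfun_apply \<pi> (\<epsilon> (axis c 1)) $ r" for \<pi> r c
    by (simp add: Npi_def matrix_def)
  define xsol where "xsol \<pi> u = (\<chi> c. det (\<chi> r c'. if c' = c then u$r else Npi \<pi> $ r $ c') / det (Npi \<pi>))"
    for \<pi> u
  have cram: "Npi \<pi> *v x = u \<longleftrightarrow> x = xsol \<pi> u" if "det (Npi \<pi>) \<noteq> 0" for \<pi> x u
    unfolding xsol_def by (rule cramer[OF that])
  have rowU_P: "row i U \<in> row_cone U" for i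
  proof -
    have "row i U = (\<Sum>i'\<in>UNIV. (if i' = i then 1 else 0) *\<^sub>R row i' U)"
      by (simp add: if_distrib[of "\<lambda>c. c *\<^sub>R x" for x] cong: if_cong)
    then show ?thesis unfolding row_cone_def by (intro CollectI exI[of _ "\<lambda>i'. if i' = i then 1 else 0"]) auto
  qed
  have detnz: "det (Npi \<pi>) \<noteq> 0" if "\<pi> \<in> Delta (row_cone U) (col_dual V)" for \<pi>
  proof -
    from that have Pin: "row_cone U \<subseteq> blinfun_apply \<pi> ` psd_cone" by (simp add: Delta_def)
    have "rows U \<subseteq> range (\<lambda>y. blinfun_apply \<pi> (\<epsilon> y))"
    proof
      fix x assume "x \<in> rows U" then obtain i where x: "x = row i U" by (auto simp: rows_def)
      have "row i U \<in> blinfun_apply \<pi> ` psd_cone" using subsetD[OF Pin rowU_P[of i]] .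
      then obtain Y where Y1: "row i U = blinfun_apply \<pi> Y" and Y2: "Y \<in> psd_cone" by (rule imageE)
      have Y: "Y \<in> psd_cone" "blinfun_apply \<pi> Y = x" using Y1 Y2 x by simp_all
      have "transpose Y = Y" using Y(1) by (simp add: psd_cone_def)
      then have "\<epsilon> (e Y) = Y" by (rule \<epsilon>e)
      then show "x \<in> range (\<lambda>y. blinfun_apply \<pi> (\<epsilon> y))" using Y(2) by (metis rangeI)
    qed
    moreover have "subspace (range (\<lambda>y. blinfun_apply \<pi> (\<epsilon> y)))"
      by (rule linear_subspace_image[OF lin_pe subspace_UNIV])
    ultimately have "span (rows U) \<subseteq> range (\<lambda>y. blinfun_apply \<pi> (\<epsilon> y))" by (rule span_minimal)
    then have "surj (\<lambda>y. Npi \<pi> *v y)" using spanU by (auto simp: Nmul)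
    then obtain B' where "Npi \<pi> ** B' = mat 1" using matrix_right_invertible_surjective by blast
    then have "invertible (Npi \<pi>)" using matrix_left_right_inverse unfolding invertible_def by blast
    then show ?thesis by (simp add: invertible_det_nz)
  qed
  have F: "piB B \<in> Delta (row_cone U) (col_dual V) \<and> (\<forall>i. blinfun_apply (piB B) (A$i) = row i U) \<and>
      (\<forall>j X. column j V \<bullet> blinfun_apply (piB B) X = trace_ip (B$j) X)"
    if "(A, B) \<in> (psd_factorizations M :: (((real^'k^'k)^'p) \<times> ((real^'k^'k)^'q)) set)" for A B
  proof -
    from that have Apsd: "\<forall>i. A$i \<in> psd_cone" and Bpsd: "\<forall>j. B$j \<in> psd_cone"
      and Mij: "\<forall>i j. M$i$j = trace_ip (A$i) (B$j)" by (auto simp: psd_factorizations_def)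
    have Bsym: "transpose (B$j) = B$j" for j using Bpsd by (simp add: psd_cone_def)
    have MR: "M ** R = U" using R assms(5) by (simp add: matrix_mul_assoc[symmetric])
    have F1: "blinfun_apply (piB B) (A$i) = row i U" for i
    proof -
      have "blinfun_apply (piB B) (A$i) = (\<Sum>j\<in>UNIV. M$i$j *\<^sub>R row j R)"
        by (simp add: piB_apply Mij trace_ip_comm[of "B$_"])
      also have "\<dots> = row i (M ** R)" by (simp add: row_mult)
      finally show ?thesis by (simp add: MR)
    qed
    have subS: "subspace S" unfolding S_eq by (rule linear_subspace_image[OF \<epsilon>lin subspace_UNIV])
    have spanA: "span (range (\<lambda>i. A$i)) = S"
    proof -
      have sub: "range (\<lambda>i. A$i) \<subseteq> S" using Apsd by (auto simp: S_def psd_cone_def)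
      have dS: "dim S \<le> CARD('d)"
        using dim_image_le[OF \<epsilon>lin, of UNIV] by (simp add: S_eq)
      define \<Phi> where "\<Phi> X = (\<chi> j. trace_ip X (B$j))" for X :: "real^'k^'k"
      have lin\<Phi>: "linear \<Phi>"
        by (rule linearI) (simp_all add: \<Phi>_def vec_eq_iff trace_ip_add1 trace_ip_scale1)
      have rowM: "row i M = \<Phi> (A$i)" for i by (simp add: \<Phi>_def row_def Mij vec_eq_iff)
      have "rows M = \<Phi> ` range (\<lambda>i. A$i)" unfolding rows_def by (auto simp: rowM)
      then have "CARD('d) \<le> dim (range (\<lambda>i. A$i))"
        using dim_image_le[OF lin\<Phi>, of "range (\<lambda>i. A$i)"] assms(3) by (simp add: row_rank_def)
      then have "span (range (\<lambda>i. A$i)) = span S" using dim_eq_span[OF sub] dS by simp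
      then show ?thesis using subS by simp
    qed
    have piT: "blinfun_apply (piB B) (transpose X) = blinfun_apply (piB B) X" for X
      by (simp add: piB_apply trace_ip_transpose[OF Bsym])
    have F3: "column j V \<bullet> blinfun_apply (piB B) X = trace_ip (B$j) X" for j X
    proof -
      define L where "L X = column j V \<bullet> blinfun_apply (piB B) X - trace_ip (B$j) X" for X
      have linL: "linear L"
        by (rule linearI) (simp_all add: L_def blinfun.add_right blinfun.scaleR_right inner_add_right
            trace_ip_add2 trace_ip_scale2 algebra_simps)
      have L0: "L (A$i) = 0" for i
      proof -
        have "column j V \<bullet> row i U = M$i$j" by (simp add: assms(5) mult_entry inner_commute)
        then show ?thesis by (simp add: L_def F1 Mij trace_ip_comm[of "B$_"])
      qed
      have LT: "L (transpose X) = L X" for X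
        by (simp add: L_def piT trace_ip_transpose[OF Bsym])
      have "L X = L ((1/2) *\<^sub>R (X + transpose X))"
        using linear_scale[OF linL] linear_add[OF linL] LT by simp
      moreover have "(1/2) *\<^sub>R (X + transpose X) \<in> S"
        by (simp add: S_def transpose_def vec_eq_iff add.commute)
      ultimately have "L X = 0"
        using linear_eq_0_on_span[OF linL, of "range (\<lambda>i. A$i)"] L0 spanA by auto
      then show ?thesis by (simp add: L_def)
    qed
    have inD: "piB B \<in> Delta (row_cone U) (col_dual V)"
      unfolding Delta_def
    proof (intro CollectI conjI allI)
      show "blinfun_apply (piB B) (transpose X) = blinfun_apply (piB B) X" for X by (rule piT)
      show "row_cone U \<subseteq> blinfun_apply (piB B) ` psd_cone"
      proof
        fix x assume "x \<in> row_cone U"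
        then obtain c where c: "\<forall>i. 0 \<le> c i" "x = (\<Sum>i\<in>UNIV. c i *\<^sub>R row i U)"
          by (auto simp: row_cone_def)
        have mem: "(\<Sum>i\<in>UNIV. c i *\<^sub>R A$i) \<in> psd_cone" by (rule psd_comb[OF Apsd c(1)])
        have "blinfun_apply (piB B) (\<Sum>i\<in>UNIV. c i *\<^sub>R A$i) = (\<Sum>i\<in>UNIV. c i *\<^sub>R blinfun_apply (piB B) (A$i))"
          by (simp only: blinfun.sum_right blinfun.scaleR_right)
        also have "\<dots> = x" by (simp only: F1 c(2))
        finally show "x \<in> blinfun_apply (piB B) ` psd_cone" by (rule image_eqI[OF sym mem])
      qed
      show "blinfun_apply (piB B) ` psd_cone \<subseteq> col_dual V"
        using F3 Bpsd by (auto simp: col_dual_def intro!: psd_dual)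
    qed
    show ?thesis using inD F1 F3 by blast
  qed
  define Badj where "Badj \<pi> w = (\<chi> a b. w \<bullet> blinfun_apply \<pi> (emat b a))"
    for \<pi> :: "(real^'k^'k) \<Rightarrow>\<^sub>L (real^'d)" and w :: "real^'d"
  define g where "g \<pi> = ((\<chi> i. \<epsilon> (xsol \<pi> (row i U))) :: (real^'k^'k)^'p, (\<chi> j. Badj \<pi> (column j V)) :: (real^'k^'k)^'q)"
    for \<pi>
  have Btr: "trace_ip (Badj \<pi> w) X = w \<bullet> blinfun_apply \<pi> X" for \<pi> w X
    unfolding Badj_def by (rule Badj_trace)
  have G: "g \<pi> \<in> (psd_factorizations M :: (((real^'k^'k)^'p) \<times> ((real^'k^'k)^'q)) set)
      \<and> (\<forall>i. blinfun_apply \<pi> (\<epsilon> (xsol \<pi> (row i U))) = row i U)"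
    if D: "\<pi> \<in> Delta (row_cone U) (col_dual V)" for \<pi>
  proof -
    from D have tinv: "\<And>X. blinfun_apply \<pi> (transpose X) = blinfun_apply \<pi> X"
      and Pin: "row_cone U \<subseteq> blinfun_apply \<pi> ` psd_cone"
      and Qin: "blinfun_apply \<pi> ` psd_cone \<subseteq> col_dual V" by (auto simp: Delta_def)
    have dnz: "det (Npi \<pi>) \<noteq> 0" using detnz D by blast
    have Aeq: "blinfun_apply \<pi> (\<epsilon> (xsol \<pi> u)) = u" for u
      using cram[OF dnz, of "xsol \<pi> u" u] Nmul by simp
    have Apsd: "\<epsilon> (xsol \<pi> (row i U)) \<in> psd_cone" for i
    proof -
      have "row i U \<in> blinfun_apply \<pi> ` psd_cone" using subsetD[OF Pin rowU_P[of i]] .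
      then obtain Y where Y1: "row i U = blinfun_apply \<pi> Y" and Y2: "Y \<in> psd_cone" by (rule imageE)
      have "transpose Y = Y" using Y2 by (simp add: psd_cone_def)
      then have eY: "\<epsilon> (e Y) = Y" by (rule \<epsilon>e)
      then have "Npi \<pi> *v e Y = row i U" using Y1 Nmul by simp
      then have "e Y = xsol \<pi> (row i U)" using cram[OF dnz] by blast
      then show ?thesis using eY Y2 by simp
    qed
    have Bpsd: "Badj \<pi> (column j V) \<in> psd_cone" for j
    proof -
      have "transpose (Badj \<pi> w) = Badj \<pi> w" for w
      proof -
        have eqs: "blinfun_apply \<pi> (emat a b) = blinfun_apply \<pi> (emat b a)" for a b
          using tinv[of "emat a b"] by (simp add: transpose_emat)
        show ?thesis unfolding Badj_def transpose_def vec_eq_iff by (simp add: eqs[of _ "_"])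
      qed
      moreover have "0 \<le> v \<bullet> (Badj \<pi> (column j V) *v v)" for v
      proof -
        have "v \<bullet> (Badj \<pi> (column j V) *v v) = trace_ip (Badj \<pi> (column j V)) (outer v)"
          by (simp add: trace_ip_outer)
        also have "\<dots> = column j V \<bullet> blinfun_apply \<pi> (outer v)" by (rule Btr)
        finally show ?thesis using Qin outer_psd[of v] by (auto simp: col_dual_def)
      qed
      ultimately show ?thesis by (simp add: psd_cone_def)
    qed
    have Meq: "M$i$j = trace_ip (\<epsilon> (xsol \<pi> (row i U))) (Badj \<pi> (column j V))" for i j
    proof -
      have "trace_ip (\<epsilon> (xsol \<pi> (row i U))) (Badj \<pi> (column j V))
          = column j V \<bullet> row i U" by (simp only: trace_ip_comm[of "\<epsilon> _"] Btr Aeq)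
      also have "\<dots> = M$i$j" by (simp add: assms(5) mult_entry inner_commute)
      finally show ?thesis by simp
    qed
    show ?thesis using Apsd Bpsd Meq Aeq by (simp add: g_def psd_factorizations_def)
  qed
  let ?SF = "psd_factorizations M :: (((real^'k^'k)^'p) \<times> ((real^'k^'k)^'q)) set"
  let ?D = "Delta (row_cone U) (col_dual V) :: ((real^'k^'k) \<Rightarrow>\<^sub>L (real^'d)) set"
  have fg: "g (piB (snd p)) = p" if "p \<in> ?SF" for p
  proof -
    obtain A B where p: "p = (A, B)" by (cases p)
    with that have SF: "(A, B) \<in> ?SF" by simp
    from F[OF SF] have D: "piB B \<in> ?D" and F1: "\<forall>i. blinfun_apply (piB B) (A$i) = row i U"
      and F3: "\<forall>j X. column j V \<bullet> blinfun_apply (piB B) X = trace_ip (B$j) X" by blast+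
    from SF have Asym: "transpose (A$i) = A$i" for i by (simp add: psd_factorizations_def psd_cone_def)
    have dnz: "det (Npi (piB B)) \<noteq> 0" using detnz D by blast
    have A': "\<epsilon> (xsol (piB B) (row i U)) = A$i" for i
    proof -
      have eA: "\<epsilon> (e (A$i)) = A$i" by (rule \<epsilon>e[OF Asym])
      have "Npi (piB B) *v e (A$i) = row i U" using Nmul eA F1 by simp
      then have "e (A$i) = xsol (piB B) (row i U)" using cram[OF dnz] by blast
      then show ?thesis using eA by simp
    qed
    have B': "Badj (piB B) (column j V) = B$j" for j
      by (simp add: Badj_def vec_eq_iff F3 trace_ip_emat)
    show ?thesis by (simp add: p g_def A' B')
  qed
  have gf: "piB (snd (g \<pi>)) = \<pi>" for \<pi>
    by (rule blinfun_eqI) (simp add: piB_apply g_def Btr VR_id[OF R])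
  have cf: "continuous_on ?SF (\<lambda>p. piB (snd p))"
  proof -
    have "continuous (at p within ?SF) (\<lambda>p. piB (snd p))" for p
    proof (rule continuous_blinfun_componentwiseI)
      fix i j
      have "continuous_on UNIV (\<lambda>p. blinfun_apply (piB (snd p)) j \<bullet> i)"
        unfolding piB_apply by (intro continuous_intros continuous_on_trace_ip)
      then have "continuous (at p) (\<lambda>p. blinfun_apply (piB (snd p)) j \<bullet> i)"
        by (metis continuous_on_eq_continuous_at open_UNIV UNIV_I)
      then show "continuous (at p within ?SF) (\<lambda>p. blinfun_apply (piB (snd p)) j \<bullet> i)"
        by (rule continuous_at_imp_continuous_at_within)
    qed
    then show ?thesis by (simp add: continuous_on_eq_continuous_within)
  qed
  have capp: "continuous_on T (\<lambda>\<pi>. blinfun_apply \<pi> z)" for T and z :: "real^'k^'k"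
    by (rule linear_continuous_on[OF blinfun.bounded_linear_left])
  have cN: "continuous_on T (\<lambda>\<pi>. Npi \<pi> $ r $ c)" for T r c
    unfolding Nent by (intro continuous_on_component capp)
  have cx: "continuous_on ?D (\<lambda>\<pi>. xsol \<pi> u)" for u
  proof -
    have "continuous_on ?D (\<lambda>\<pi>. (\<chi> r c'. if c' = c then u$r else Npi \<pi> $ r $ c') $ i $ j)" for c i j
      by (cases "j = c") (simp_all add: cN)
    then show ?thesis unfolding xsol_def
      by (auto intro!: continuous_on_vec_lambda continuous_on_divide continuous_on_det cN detnz)
  qed
  have c\<epsilon>: "continuous_on UNIV \<epsilon>" using \<epsilon>lin by (simp add: linear_continuous_on linear_conv_bounded_linear)
  have cg: "continuous_on ?D g"
    unfolding g_def Badj_def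
    by (intro continuous_on_Pair continuous_on_vec_lambda continuous_on_compose2[OF c\<epsilon> cx subset_UNIV]
        continuous_on_inner continuous_on_const capp)
  have "homeomorphism ?SF ?D (\<lambda>p. piB (snd p)) g"
  proof (rule homeomorphismI[OF cf cg])
    show "(\<lambda>p. piB (snd p)) ` ?SF \<subseteq> ?D"
    proof
      fix x assume "x \<in> (\<lambda>p. piB (snd p)) ` ?SF"
      then obtain A B where "(A, B) \<in> ?SF" "x = piB B" by auto
      then show "x \<in> ?D" using F by blast
    qed
    show "g ` ?D \<subseteq> ?SF" using G by blast
    show "g (piB (snd p)) = p" if "p \<in> ?SF" for p using fg that .
    show "piB (snd (g \<pi>)) = \<pi>" if "\<pi> \<in> ?D" for \<pi> by (rule gf)
  qed
  then show ?thesis unfolding homeomorphic_def by blast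
qed


end
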